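(* Let $m\ge 2$. Consider the following three (not necessarily simple) graphs. (1) ($s=1$) Let $C_{4m+2}=v_0v_1\cdots v_{4m+1}v_0$. Let $\mathscr A$ be any partition of the even-indexed vertices other than $v_0$ into blocks of size $2$, $\mathscr B$ any partition of the odd-indexed vertices other than $v_{2m+1}$ into blocks of size $2$, and $\mathscr C=\{v_0,v_{2m+1}\}$. $G^1_{2m+1}(\mathscr A,\mathscr B,\mathscr C)$ is obtained from $C_{4m+2}$ by identifying the two vertices of each block of $\mathscr A\cup\mathscr B\cup\{\mathscr C\}$. (2) ($s=2$) Let $C_{4m+1}=v_0v_1\cdots v_{4m}v_0$. Let $\mathscr A$ be any partition of the even-indexed vertices other than $v_0$ into blocks of size $2$, $\mathscr B$ any partition of the odd-indexed vertices into blocks of size $2$, and $\mathscr C=\{v_0\}$. $G^2_{2m+1}(\mathscr A,\mathscr B,\mathscr C)$ is obtained from $C_{4m+1}$ by identifying the two vertices of each block of $\mathscr A\cup\mathscr B$ (and leaving $v_0$ alone). (3) ($s=3$) Let $C_{4m+3}=v_0v_1\cdots v_{4m+2}v_0$. Let $\mathscr C=\{v_0,v_{m+1},v_{3m+2}\}$, let $\mathscr A$ be any partition of the even-indexed vertices not in $\mathscr C$ into blocks of size $2$ and $\mathscr B$ any partition of the odd-indexed vertices not in $\mathscr C$ into blocks of size $2$. $G^3_{2m+1}(\mathscr A,\mathscr B,\mathscr C)$ is obtained from $C_{4m+3}$ by identifying the three vertices of $\mathscr C$ into one vertex and identifying the two vertices of each block of $\mathscr A\cup\mathscr B$. Then $\chi_{la}(G^s_{2m+1}(\mathscr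 A,\mathscr B,\mathscr C))=3$ for $s=1,2,3$.
   Context: Identifying a set of pairwise nonadjacent vertices means replacing them by one new vertex incident to all edges previously incident to any of them (parallel edges may arise). For a connected (multi)graph $G$ with edge set $E$, $|E|=q$, a local antimagic labeling is a bijection $f:E\to\{1,\dots,q\}$ such that adjacent vertices $x,y$ satisfy $f^+(x)\ne f^+(y)$, where $f^+(x)$ is the sum of the labels of the edges incident to $x$; $\chi_{la}(G)$ is the minimum number of distinct values of $f^+$ over all local antimagic labelings of $G$. *)

theory Defs
  imports Main "HOL-Library.Disjoint_Sets"
begin

text \<open>A finite multigraph is given by an edge set E and an endpoint map
  ends :: 'e => 'v * 'v (parallel edges allowed). Vertices are the endpoints.\<close>

definition mg_vertices :: "('e \<Rightarrow> 'v \<times> 'v) \<Rightarrow> 'e set \<Rightarrow> 'v set" where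
  "mg_vertices ends E = fst ` ends ` E \<union> snd ` ends ` E"

definition mg_adjacent :: "('e \<Rightarrow> 'v \<times> 'v) \<Rightarrow> 'e set \<Rightarrow> 'v \<Rightarrow> 'v \<Rightarrow> bool" where
  "mg_adjacent ends E x y \<longleftrightarrow> (\<exists>e\<in>E. ends e = (x, y) \<or> ends e = (y, x))"

definition vsum :: "('e \<Rightarrow> 'v \<times> 'v) \<Rightarrow> 'e set \<Rightarrow> ('e \<Rightarrow> nat) \<Rightarrow> 'v \<Rightarrow> nat" where
  "vsum ends E f x = (\<Sum>e\<in>{e\<in>E. fst (ends e) = x \<or> snd (ends e) = x}. f e)"

definition local_antimagic :: "('e \<Rightarrow> 'v \<times> 'v) \<Rightarrow> 'e set \<Rightarrow> ('e \<Rightarrow> nat) \<Rightarrow> bool" where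
  "local_antimagic ends E f \<longleftrightarrow>
     bij_betw f E {1..card E} \<and>
     (\<forall>x y. mg_adjacent ends E x y \<longrightarrow> vsum ends E f x \<noteq> vsum ends E f y)"

definition chi_la :: "('e \<Rightarrow> 'v \<times> 'v) \<Rightarrow> 'e set \<Rightarrow> nat" where
  "chi_la ends E = Inf {card (vsum ends E f ` mg_vertices ends E) | f. local_antimagic ends E f}"

text \<open>The cycle C_n = v_0 v_1 ... v_{n-1} v_0 with edge i joining v_i and v_{(i+1) mod n},
  after identifying each block of a partition P of {0..<n} into a single vertex
  (the new vertex is the block itself).\<close>
definition blk :: "nat set set \<Rightarrow> nat \<Rightarrow> nat set" where
  "blk P i = (THE b. b \<in> P \<and> i \<in> b)"

definition cycle_quot :: "nat \<Rightarrow> nat set set \<Rightarrow> nat \<Rightarrow> nat set \<times> nat set" where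
  "cycle_quot n P i = (blk P i, blk P (Suc i mod n))"

end

theory Submission
  imports Defs
begin


definition upart :: "nat \<Rightarrow> nat set set \<Rightarrow> bool" where
  "upart n Q \<longleftrightarrow> (\<forall>b\<in>Q. b \<subseteq> {..<n}) \<and> (\<forall>i<n. \<exists>!b. b \<in> Q \<and> i \<in> b)"

lemma blk_props:
  assumes "upart n Q" "i < n"
  shows "blk Q i \<in> Q \<and> i \<in> blk Q i"
proof -
  have "\<exists>!b. b \<in> Q \<and> i \<in> b" using assms unfolding upart_def by blast
  then show ?thesis unfolding blk_def by (rule theI')
qed

lemma blk_eq:
  assumes "upart n Q" "b \<in> Q" "i \<in> b"
  shows "blk Q i = b"
proof -
  have "i < n" using assms unfolding upart_def by blast
  then have "\<exists>!b. b \<in> Q \<and> i \<in> b" using assms unfolding upart_def by blast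
  then show ?thesis unfolding blk_def using assms by (metis (mono_tags, lifting) the1_equality)
qed

lemma pred_succ: "e < n \<Longrightarrow> (Suc e mod n + n - 1) mod n = e"
proof (cases "Suc e = n")
  case True then show ?thesis by simp
next
  case False
  assume "e < n"
  then have "Suc e < n" using False by simp
  then show ?thesis by simp
qed

lemma succ_pred: "a < n \<Longrightarrow> Suc ((a + n - 1) mod n) mod n = a"
proof (cases "a = 0")
  case True
  assume "a < n"
  then show ?thesis using True by (simp add: Suc_diff_1)
next
  case False
  assume "a < n"
  then have e1: "(a + n - 1) = (a - 1) + n" using False by simp
  have "a - 1 < n" using \<open>a < n\<close> by simp
  then have "(a + n - 1) mod n = a - 1" unfolding e1 by (metis mod_add_self2 mod_less)
  then show ?thesis using False \<open>a < n\<close> by simp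
qed

lemma vsum_blk:
  assumes U: "upart n Q" and NL: "\<forall>i<n. blk Q i \<noteq> blk Q (Suc i mod n)" and b: "b \<in> Q"
  shows "vsum (cycle_quot n Q) {..<n} f b = (\<Sum>j\<in>b. f j + f ((j + n - 1) mod n))"
proof -
  have bsub: "b \<subseteq> {..<n}" using U b unfolding upart_def by blast
  have iff: "blk Q e = b \<longleftrightarrow> e \<in> b" if "e < n" for e
    using blk_props[OF U that] blk_eq[OF U b] by blast
  have S: "{e\<in>{..<n}. fst (cycle_quot n Q e) = b \<or> snd (cycle_quot n Q e) = b}
      = {e\<in>{..<n}. e \<in> b} \<union> {e\<in>{..<n}. Suc e mod n \<in> b}"
  proof (rule set_eqI)
    fix e
    show "e \<in> {e\<in>{..<n}. fst (cycle_quot n Q e) = b \<or> snd (cycle_quot n Q e) = b} \<longleftrightarrow>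
      e \<in> {e\<in>{..<n}. e \<in> b} \<union> {e\<in>{..<n}. Suc e mod n \<in> b}"
    proof (cases "e < n")
      case True
      then have "Suc e mod n < n" by simp
      then show ?thesis unfolding cycle_quot_def using iff[OF True] iff[of "Suc e mod n"] True by auto
    qed auto
  qed
  have D: "{e\<in>{..<n}. e \<in> b} \<inter> {e\<in>{..<n}. Suc e mod n \<in> b} = {}"
  proof (rule ccontr)
    assume "\<not> ?thesis"
    then obtain e where e: "e < n" "e \<in> b" "Suc e mod n \<in> b" by blast
    then have "blk Q e = b" "blk Q (Suc e mod n) = b" using blk_eq[OF U b] by auto
    then show False using NL e(1) by auto
  qed
  have S1: "{e\<in>{..<n}. e \<in> b} = b" using bsub by auto
  have S2: "(\<Sum>e\<in>{e\<in>{..<n}. Suc e mod n \<in> b}. f e) = (\<Sum>j\<in>b. f ((j + n - 1) mod n))"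
    apply (rule sum.reindex_bij_witness[where i = "\<lambda>j. (j + n - 1) mod n" and j = "\<lambda>e. Suc e mod n"])
    using bsub pred_succ succ_pred by auto
  have "vsum (cycle_quot n Q) {..<n} f b = (\<Sum>e\<in>{e\<in>{..<n}. e \<in> b} \<union> {e\<in>{..<n}. Suc e mod n \<in> b}. f e)"
    unfolding vsum_def S by simp
  also have "\<dots> = (\<Sum>e\<in>{e\<in>{..<n}. e \<in> b}. f e) + (\<Sum>e\<in>{e\<in>{..<n}. Suc e mod n \<in> b}. f e)"
    by (rule sum.union_disjoint) (use D in auto)
  also have "\<dots> = (\<Sum>j\<in>b. f j) + (\<Sum>j\<in>b. f ((j + n - 1) mod n))" using S1 S2 by simp
  also have "\<dots> = (\<Sum>j\<in>b. f j + f ((j + n - 1) mod n))" by (simp add: sum.distrib)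
  finally show ?thesis .
qed



definition lab :: "nat \<Rightarrow> nat \<Rightarrow> nat" where
  "lab n j = (if even j then j div 2 + 1 else n - j div 2)"

lemma lab_bij: "bij_betw (lab n) {..<n} {1..n}"
proof -
  have inj: "inj_on (lab n) {..<n}"
  proof (rule inj_onI)
    fix i j assume i: "i \<in> {..<n}" and j: "j \<in> {..<n}" and eq: "lab n i = lab n j"
    show "i = j"
    proof (cases "even i")
      case True
      then obtain p where p: "i = 2*p" by blast
      show ?thesis
      proof (cases "even j")
        case True
        then obtain q where "j = 2*q" by blast
        then show ?thesis using p eq unfolding lab_def by simp
      next
        case False
        then obtain q where "j = 2*q+1" using oddE by blast
        then show ?thesis using p eq i j unfolding lab_def by simp
      qed
    next
      case False
      then obtain p where p: "i = 2*p+1" using oddE by blast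
      show ?thesis
      proof (cases "even j")
        case True
        then obtain q where "j = 2*q" by blast
        then show ?thesis using p eq i j unfolding lab_def by simp
      next
        case False
        then obtain q where "j = 2*q+1" using oddE by blast
        then show ?thesis using p eq i j unfolding lab_def by simp
      qed
    qed
  qed
  have sub: "lab n ` {..<n} \<subseteq> {1..n}"
  proof
    fix x assume "x \<in> lab n ` {..<n}"
    then obtain i where i: "i < n" "x = lab n i" by auto
    show "x \<in> {1..n}"
    proof (cases "even i")
      case True
      then obtain p where "i = 2*p" by blast
      then show ?thesis using i unfolding lab_def by simp
    next
      case False
      then obtain p where "i = 2*p+1" using oddE by blast
      then show ?thesis using i unfolding lab_def by simp
    qed
  qed
  have "card (lab n ` {..<n}) = card {1..n}" using card_image[OF inj] by simp
  then have "lab n ` {..<n} = {1..n}" using sub by (simp add: card_subset_eq)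
  then show ?thesis using inj unfolding bij_betw_def by simp
qed

lemma lab_s: 
  assumes "0 < j" "j < n"
  shows "lab n j + lab n ((j + n - 1) mod n) = (if odd j then n + 1 else n + 2)"
proof -
  have e1: "(j + n - 1) = (j - 1) + n" using assms by simp
  have "j - 1 < n" using assms by simp
  then have pm: "(j + n - 1) mod n = j - 1" unfolding e1 by (metis mod_add_self2 mod_less)
  show ?thesis
  proof (cases "even j")
    case True
    then obtain p where p: "j = 2*p" by blast
    then have "p > 0" using assms by simp
    then obtain q where "p = Suc q" using gr0_implies_Suc by blast
    then have "j = 2*q + 2" using p by simp
    then show ?thesis using pm assms unfolding lab_def by simp
  next
    case False
    then obtain p where p: "j = 2*p+1" using oddE by blast
    then show ?thesis using pm assms unfolding lab_def by simp
  qed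
qed

lemma lower_bound:
  assumes U: "upart n Q" and k: "odd k" "k \<le> n" "blk Q (k mod n) = blk Q 0"
    and LA: "local_antimagic (cycle_quot n Q) {..<n} f"
  shows "3 \<le> card (vsum (cycle_quot n Q) {..<n} f ` mg_vertices (cycle_quot n Q) {..<n})"
proof (rule ccontr)
  let ?W = "vsum (cycle_quot n Q) {..<n} f ` mg_vertices (cycle_quot n Q) {..<n}"
  assume "\<not> ?thesis"
  then have cW: "card ?W < 3" by simp
  have fin: "finite ?W" unfolding mg_vertices_def by simp
  have n0: "0 < n" using k by (cases k) auto
  define g where "g i = vsum (cycle_quot n Q) {..<n} f (blk Q (i mod n))" for i
  have inW: "g i \<in> ?W" for i
  proof -
    have "i mod n \<in> {..<n}" using n0 by simp
    then have "blk Q (i mod n) \<in> mg_vertices (cycle_quot n Q) {..<n}"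
      unfolding mg_vertices_def cycle_quot_def by force
    then show ?thesis unfolding g_def by blast
  qed
  have step: "g i \<noteq> g (Suc i)" if "i < k" for i
  proof -
    have i: "i < n" using that k by simp
    have "mg_adjacent (cycle_quot n Q) {..<n} (blk Q i) (blk Q (Suc i mod n))"
      unfolding mg_adjacent_def cycle_quot_def using i by blast
    then show ?thesis using LA i unfolding local_antimagic_def g_def by simp
  qed
  have three: "x = y \<or> y = z \<or> x = z" if "x \<in> ?W" "y \<in> ?W" "z \<in> ?W" for x y z
  proof (rule ccontr)
    assume "\<not> ?thesis"
    then have "card {x, y, z} = 3" by simp
    moreover have "card {x,y,z} \<le> card ?W" using that fin by (intro card_mono) auto
    ultimately show False using cW by simp
  qed
  have alt: "i \<le> k \<Longrightarrow> (g i = g 0 \<longleftrightarrow> even i)" for i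
  proof (induction i)
    case 0 then show ?case by simp
  next
    case (Suc i)
    then have IH: "g i = g 0 \<longleftrightarrow> even i" and lt: "i < k" by auto
    show ?case
    proof (cases "even i")
      case True
      then show ?thesis using IH step[OF lt] by simp
    next
      case False
      then have "g i \<noteq> g 0" using IH by simp
      then have "g (Suc i) = g 0" using three[OF inW[of 0] inW[of i] inW[of "Suc i"]] step[OF lt] by auto
      then show ?thesis using False by simp
    qed
  qed
  have "g k = g 0" unfolding g_def using k(3) by simp
  then show False using alt[of k] k(1) by simp
qed



lemma generic:
  fixes n c :: nat and A B :: "nat set set" and C :: "nat set"
  assumes pA: "partition_on {i. i<n \<and> even i \<and> i\<notin>C} A" and cA: "\<forall>b\<in>A. card b = 2"
    and pB: "partition_on {i. i<n \<and> odd i \<and> i\<notin>C} B" and cB: "\<forall>b\<in>B. card b = 2"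
    and Csub: "C \<subseteq> {..<n}" and C0: "0 \<in> C" and C1: "1 \<notin> C" and C2: "2 \<notin> C" and n2: "2 < n"
    and Cnc: "\<forall>i<n. \<not>(i \<in> C \<and> Suc i mod n \<in> C)"
    and csum: "(\<Sum>j\<in>C. lab n j + lab n ((j + n - 1) mod n)) = c"
    and cne1: "c \<noteq> 2*(n+2)" and cne2: "c \<noteq> 2*(n+1)"
    and k: "odd k" "k \<le> n" "k mod n \<in> C"
  shows "chi_la (cycle_quot n (A \<union> B \<union> {C})) {..<n} = 3"
proof -
  define Q where "Q = A \<union> B \<union> {C}"
  have Asub: "j < n \<and> even j \<and> j \<notin> C" if "b \<in> A" "j \<in> b" for b j
    using partition_onD1[OF pA] that by blast
  have Bsub: "j < n \<and> odd j \<and> j \<notin> C" if "b \<in> B" "j \<in> b" for b j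
    using partition_onD1[OF pB] that by blast
  have dA: "disjoint A" using pA partition_onD2 by blast
  have dB: "disjoint B" using pB partition_onD2 by blast
  have U: "upart n Q"
    unfolding upart_def
  proof (intro conjI allI impI ballI)
    fix b assume "b \<in> Q"
    then show "b \<subseteq> {..<n}" unfolding Q_def using Asub Bsub Csub by blast
  next
    fix i assume i: "i < n"
    show "\<exists>!b. b \<in> Q \<and> i \<in> b"
    proof (cases "i \<in> C")
      case True
      show ?thesis
      proof (rule ex1I[of _ C])
        show "C \<in> Q \<and> i \<in> C" unfolding Q_def using True by simp
      next
        fix b assume "b \<in> Q \<and> i \<in> b"
        then show "b = C" unfolding Q_def using Asub Bsub True by blast
      qed
    next
      case False
      show ?thesis
      proof (cases "even i")
        case True
        then have "i \<in> \<Union>A" using partition_onD1[OF pA] i False by blast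
        then obtain b where b: "b \<in> A" "i \<in> b" by blast
        show ?thesis
        proof (rule ex1I[of _ b])
          show "b \<in> Q \<and> i \<in> b" unfolding Q_def using b by simp
        next
          fix b' assume b': "b' \<in> Q \<and> i \<in> b'"
          show "b' = b"
          proof (rule ccontr)
            assume ne: "b' \<noteq> b"
            have "b' \<in> A \<or> b' \<in> B \<or> b' = C" using b' unfolding Q_def by blast
            then show False
            proof (elim disjE)
              assume "b' \<in> A" then show False using disjointD[OF dA _ b(1) ne] b b' by blast
            next
              assume "b' \<in> B" then show False using Bsub b' True by blast
            next
              assume "b' = C" then show False using False b' by blast
            qed
          qed
        qed
      next
        case odd: False
        then have "i \<in> \<Union>B" using partition_onD1[OF pB] i False by blast
        then obtain b where b: "b \<in> B" "i \<in> b" by blast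
        show ?thesis
        proof (rule ex1I[of _ b])
          show "b \<in> Q \<and> i \<in> b" unfolding Q_def using b by simp
        next
          fix b' assume b': "b' \<in> Q \<and> i \<in> b'"
          show "b' = b"
          proof (rule ccontr)
            assume ne: "b' \<noteq> b"
            have "b' \<in> A \<or> b' \<in> B \<or> b' = C" using b' unfolding Q_def by blast
            then show False
            proof (elim disjE)
              assume "b' \<in> B" then show False using disjointD[OF dB _ b(1) ne] b b' by blast
            next
              assume "b' \<in> A" then show False using Asub b' odd by blast
            next
              assume "b' = C" then show False using False b' by blast
            qed
          qed
        qed
      qed
    qed
  qed
  have succ: "Suc i mod n = Suc i \<or> Suc i mod n = 0" if "i < n" for i
    using that by (cases "Suc i = n") auto
  have NL: "\<forall>i<n. blk Q i \<noteq> blk Q (Suc i mod n)"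
  proof (intro allI impI notI)
    fix i assume i: "i < n" and eq: "blk Q i = blk Q (Suc i mod n)"
    define b where "b = blk Q i"
    have i': "Suc i mod n < n" using i by simp
    have bQ: "b \<in> Q" "i \<in> b" "Suc i mod n \<in> b"
      using blk_props[OF U i] blk_props[OF U i'] eq unfolding b_def by auto
    have "b \<in> A \<or> b \<in> B \<or> b = C" using bQ unfolding Q_def by blast
    then show False
    proof (elim disjE)
      assume "b \<in> A"
      then show False using Asub[of b i] Asub[of b "Suc i mod n"] bQ succ[OF i] C0 by auto
    next
      assume "b \<in> B"
      then show False using Bsub[of b i] Bsub[of b "Suc i mod n"] bQ succ[OF i] C0 by auto
    next
      assume "b = C"
      then show False using Cnc i bQ by blast
    qed
  qed
  define V where "V i = (if i \<in> C then c else if even i then 2*(n+2) else 2*(n+1))" for i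
  have Vd: "vsum (cycle_quot n Q) {..<n} (lab n) (blk Q i) = V i" if i: "i < n" for i
  proof -
    define b where "b = blk Q i"
    have bQ: "b \<in> Q" "i \<in> b" using blk_props[OF U i] unfolding b_def by auto
    have vs: "vsum (cycle_quot n Q) {..<n} (lab n) b = (\<Sum>j\<in>b. lab n j + lab n ((j + n - 1) mod n))"
      using vsum_blk[OF U NL bQ(1)] .
    have "b \<in> A \<or> b \<in> B \<or> b = C" using bQ unfolding Q_def by blast
    then have "vsum (cycle_quot n Q) {..<n} (lab n) b = V i"
    proof (elim disjE)
      assume bA: "b \<in> A"
      have "(\<Sum>j\<in>b. lab n j + lab n ((j + n - 1) mod n)) = (\<Sum>j\<in>b. n + 2)"
      proof (rule sum.cong)
        fix j assume "j \<in> b"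
        then have "j < n" "even j" "j \<noteq> 0" using Asub[OF bA] C0 by metis+
        then show "lab n j + lab n ((j + n - 1) mod n) = n + 2" using lab_s[of j n] by simp
      qed simp
      also have "\<dots> = 2 * (n+2)" using cA bA by simp
      finally show ?thesis using vs Asub[OF bA bQ(2)] unfolding V_def by simp
    next
      assume bB: "b \<in> B"
      have "(\<Sum>j\<in>b. lab n j + lab n ((j + n - 1) mod n)) = (\<Sum>j\<in>b. n + 1)"
      proof (rule sum.cong)
        fix j assume "j \<in> b"
        then have "j < n" "odd j" "j \<noteq> 0" using Bsub[OF bB] by (metis, metis, metis odd_pos less_numeral_extra(3))
        then show "lab n j + lab n ((j + n - 1) mod n) = n + 1" using lab_s[of j n] by simp
      qed simp
      also have "\<dots> = 2 * (n+1)" using cB bB by simp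
      finally show ?thesis using vs Bsub[OF bB bQ(2)] unfolding V_def by simp
    next
      assume "b = C"
      then show ?thesis using vs csum bQ(2) unfolding V_def by simp
    qed
    then show ?thesis unfolding b_def .
  qed
  have Vadj: "V i \<noteq> V (Suc i mod n)" if i: "i < n" for i
  proof -
    have nc: "\<not>(i \<in> C \<and> Suc i mod n \<in> C)" using Cnc i by blast
    show ?thesis
    proof (cases "i \<in> C \<or> Suc i mod n \<in> C")
      case True
      then show ?thesis using nc cne1 cne2 unfolding V_def by auto
    next
      case False
      then have "Suc i mod n = Suc i" using succ[OF i] C0 by auto
      then show ?thesis using False unfolding V_def by auto
    qed
  qed
  have Vimg: "V ` {..<n} = {c, 2*(n+2), 2*(n+1)}"
  proof
    show "V ` {..<n} \<subseteq> {c, 2*(n+2), 2*(n+1)}" unfolding V_def by auto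
    have "V 0 = c" "V 2 = 2*(n+2)" "V 1 = 2*(n+1)" unfolding V_def using C0 C1 C2 by auto
    moreover have "0 \<in> {..<n}" "1 \<in> {..<n}" "2 \<in> {..<n}" using n2 by auto
    ultimately show "{c, 2*(n+2), 2*(n+1)} \<subseteq> V ` {..<n}" by (metis empty_subsetI image_eqI insert_subset)
  qed
  have card3: "card (V ` {..<n}) = 3" unfolding Vimg using cne1 cne2 by simp
  have verts: "mg_vertices (cycle_quot n Q) {..<n} = blk Q ` {..<n}"
  proof
    show "blk Q ` {..<n} \<subseteq> mg_vertices (cycle_quot n Q) {..<n}"
      unfolding mg_vertices_def cycle_quot_def by force
    have "blk Q (Suc e mod n) \<in> blk Q ` {..<n}" if "e < n" for e
      using that by (intro imageI) simp
    then show "mg_vertices (cycle_quot n Q) {..<n} \<subseteq> blk Q ` {..<n}"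
      unfolding mg_vertices_def cycle_quot_def by auto
  qed
  have img: "vsum (cycle_quot n Q) {..<n} (lab n) ` mg_vertices (cycle_quot n Q) {..<n} = V ` {..<n}"
    unfolding verts image_image using Vd by (intro image_cong) auto
  have LA: "local_antimagic (cycle_quot n Q) {..<n} (lab n)"
    unfolding local_antimagic_def
  proof (intro conjI allI impI)
    show "bij_betw (lab n) {..<n} {1..card {..<n}}" using lab_bij by simp
  next
    fix x y assume "mg_adjacent (cycle_quot n Q) {..<n} x y"
    then obtain e where e: "e < n" "(x = blk Q e \<and> y = blk Q (Suc e mod n)) \<or> (y = blk Q e \<and> x = blk Q (Suc e mod n))"
      unfolding mg_adjacent_def cycle_quot_def by auto
    have e': "Suc e mod n < n" using e by simp
    show "vsum (cycle_quot n Q) {..<n} (lab n) x \<noteq> vsum (cycle_quot n Q) {..<n} (lab n) y"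
      using e Vd[OF e(1)] Vd[OF e'] Vadj[OF e(1)] by auto
  qed
  have kb: "blk Q (k mod n) = blk Q 0" using blk_eq[OF U _ k(3)] blk_eq[OF U _ C0] unfolding Q_def by simp
  have "Inf {card (vsum (cycle_quot n Q) {..<n} f ` mg_vertices (cycle_quot n Q) {..<n}) | f.
           local_antimagic (cycle_quot n Q) {..<n} f} = 3"
  proof (rule cInf_eq_minimum)
    show "3 \<in> {card (vsum (cycle_quot n Q) {..<n} f ` mg_vertices (cycle_quot n Q) {..<n}) | f.
           local_antimagic (cycle_quot n Q) {..<n} f}"
      using LA img card3 by (intro CollectI exI[of _ "lab n"]) simp
  next
    fix x assume "x \<in> {card (vsum (cycle_quot n Q) {..<n} f ` mg_vertices (cycle_quot n Q) {..<n}) | f.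
           local_antimagic (cycle_quot n Q) {..<n} f}"
    then show "3 \<le> x" using lower_bound[OF U k(1,2) kb] by auto
  qed
  then show ?thesis unfolding chi_la_def Q_def .
qed



lemma case1:
  fixes m :: nat assumes m: "m \<ge> 2"
    and pA: "partition_on {i. i < 4*m+2 \<and> even i \<and> i \<noteq> 0} A" and cA: "\<forall>b\<in>A. card b = 2"
    and pB: "partition_on {i. i < 4*m+2 \<and> odd i \<and> i \<noteq> 2*m+1} B" and cB: "\<forall>b\<in>B. card b = 2"
  shows "chi_la (cycle_quot (4*m+2) (A \<union> B \<union> {{0, 2*m+1}})) {..<4*m+2} = 3"
proof (rule generic)
  let ?n = "4*m+2" and ?C = "{0, 2*m+1::nat}"
  have "{i. i < 4*m+2 \<and> even i \<and> i \<noteq> 0} = {i. i < ?n \<and> even i \<and> i \<notin> ?C}" by auto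
  then show "partition_on {i. i < ?n \<and> even i \<and> i \<notin> ?C} A" using pA by simp
  have "{i. i < 4*m+2 \<and> odd i \<and> i \<noteq> 2*m+1} = {i. i < ?n \<and> odd i \<and> i \<notin> ?C}" using odd_pos by auto
  then show "partition_on {i. i < ?n \<and> odd i \<and> i \<notin> ?C} B" using pB by simp
  show "\<forall>b\<in>A. card b = 2" "\<forall>b\<in>B. card b = 2" by fact+
  show "?C \<subseteq> {..<?n}" "0 \<in> ?C" "1 \<notin> ?C" "2 \<notin> ?C" "2 < ?n" using m by auto
  show "\<forall>i<?n. \<not>(i \<in> ?C \<and> Suc i mod ?n \<in> ?C)"
  proof (intro allI impI notI)
    fix i assume "i < ?n" "i \<in> ?C \<and> Suc i mod ?n \<in> ?C"
    then have i: "i = 0 \<or> i = 2*m+1" and si: "Suc i mod ?n \<in> ?C" by auto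
    have "Suc i < ?n" using i m by auto
    then have "Suc i \<in> ?C" using si by simp
    then show False using i m by auto
  qed
  have s0: "lab ?n 0 + lab ?n ((0 + ?n - 1) mod ?n) = 2*m+3"
  proof -
    have "(0 + ?n - 1) mod ?n = 4*m+1" by simp
    moreover have "odd (4*m+1::nat)" by simp
    moreover have "(4*m+1) div 2 = 2*m" by simp
    ultimately show ?thesis unfolding lab_def by simp
  qed
  have s1: "lab ?n (2*m+1) + lab ?n ((2*m+1 + ?n - 1) mod ?n) = 4*m+3"
    using lab_s[of "2*m+1" ?n] by simp
  show "(\<Sum>j\<in>?C. lab ?n j + lab ?n ((j + ?n - 1) mod ?n)) = 6*m+6"
    using s0 s1 by simp
  show "6*m+6 \<noteq> 2*(?n+2)" "6*m+6 \<noteq> 2*(?n+1)" using m by auto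
  show "odd (2*m+1)" "2*m+1 \<le> ?n" "(2*m+1) mod ?n \<in> ?C" by auto
qed

lemma case2:
  fixes m :: nat assumes m: "m \<ge> 2"
    and pA: "partition_on {i. i < 4*m+1 \<and> even i \<and> i \<noteq> 0} A" and cA: "\<forall>b\<in>A. card b = 2"
    and pB: "partition_on {i. i < 4*m+1 \<and> odd i} B" and cB: "\<forall>b\<in>B. card b = 2"
  shows "chi_la (cycle_quot (4*m+1) (A \<union> B \<union> {{0}})) {..<4*m+1} = 3"
proof (rule generic)
  let ?n = "4*m+1" and ?C = "{0::nat}"
  have "{i. i < 4*m+1 \<and> even i \<and> i \<noteq> 0} = {i. i < ?n \<and> even i \<and> i \<notin> ?C}" by auto
  then show "partition_on {i. i < ?n \<and> even i \<and> i \<notin> ?C} A" using pA by simp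
  have "{i. i < 4*m+1 \<and> odd i} = {i. i < ?n \<and> odd i \<and> i \<notin> ?C}" using odd_pos by auto
  then show "partition_on {i. i < ?n \<and> odd i \<and> i \<notin> ?C} B" using pB by simp
  show "\<forall>b\<in>A. card b = 2" "\<forall>b\<in>B. card b = 2" by fact+
  show "?C \<subseteq> {..<?n}" "0 \<in> ?C" "1 \<notin> ?C" "2 \<notin> ?C" "2 < ?n" using m by auto
  show "\<forall>i<?n. \<not>(i \<in> ?C \<and> Suc i mod ?n \<in> ?C)"
  proof (intro allI impI notI)
    fix i assume "i < ?n" "i \<in> ?C \<and> Suc i mod ?n \<in> ?C"
    then have "i = 0" "Suc i mod ?n \<in> ?C" by auto
    moreover have "Suc 0 mod ?n = 1" using m by auto
    ultimately show False by auto
  qed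
  have s0: "lab ?n 0 + lab ?n ((0 + ?n - 1) mod ?n) = 2*m+2"
  proof -
    have "(0 + ?n - 1) mod ?n = 4*m" by simp
    moreover have "even (4*m::nat)" by simp
    moreover have "(4*m) div 2 = 2*m" by simp
    ultimately show ?thesis unfolding lab_def by simp
  qed
  show "(\<Sum>j\<in>?C. lab ?n j + lab ?n ((j + ?n - 1) mod ?n)) = 2*m+2"
    using s0 by simp
  show "2*m+2 \<noteq> 2*(?n+2)" "2*m+2 \<noteq> 2*(?n+1)" using m by auto
  show "odd ?n" "?n \<le> ?n" "?n mod ?n \<in> ?C" by auto
qed

lemma case3:
  fixes m :: nat assumes m: "m \<ge> 2"
    and pA: "partition_on {i. i < 4*m+3 \<and> even i \<and> i \<notin> {0, m+1, 3*m+2}} A" and cA: "\<forall>b\<in>A. card b = 2"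
    and pB: "partition_on {i. i < 4*m+3 \<and> odd i \<and> i \<notin> {0, m+1, 3*m+2}} B" and cB: "\<forall>b\<in>B. card b = 2"
  shows "chi_la (cycle_quot (4*m+3) (A \<union> B \<union> {{0, m+1, 3*m+2}})) {..<4*m+3} = 3"
proof (rule generic)
  let ?n = "4*m+3" and ?C = "{0, m+1, 3*m+2::nat}"
  show "partition_on {i. i < ?n \<and> even i \<and> i \<notin> ?C} A" using pA by simp
  show "partition_on {i. i < ?n \<and> odd i \<and> i \<notin> ?C} B" using pB by simp
  show "\<forall>b\<in>A. card b = 2" "\<forall>b\<in>B. card b = 2" by fact+
  show "?C \<subseteq> {..<?n}" "0 \<in> ?C" "1 \<notin> ?C" "2 \<notin> ?C" "2 < ?n" using m by auto
  show "\<forall>i<?n. \<not>(i \<in> ?C \<and> Suc i mod ?n \<in> ?C)"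
  proof (intro allI impI notI)
    fix i assume "i < ?n" "i \<in> ?C \<and> Suc i mod ?n \<in> ?C"
    then have i: "i = 0 \<or> i = m+1 \<or> i = 3*m+2" and si: "Suc i mod ?n \<in> ?C" by auto
    have "Suc i < ?n" using i m by auto
    then have "Suc i \<in> ?C" using si by simp
    then show False using i m by auto
  qed
  have s0: "lab ?n 0 + lab ?n ((0 + ?n - 1) mod ?n) = 2*m+3"
  proof -
    have "(0 + ?n - 1) mod ?n = 4*m+2" by simp
    moreover have "even (4*m+2::nat)" by simp
    moreover have "(4*m+2) div 2 = 2*m+1" by simp
    ultimately show ?thesis unfolding lab_def by simp
  qed
  have sa: "lab ?n (m+1) + lab ?n ((m+1 + ?n - 1) mod ?n) = (if odd (m+1) then ?n+1 else ?n+2)"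
    using lab_s[of "m+1" ?n] by simp
  have sb: "lab ?n (3*m+2) + lab ?n ((3*m+2 + ?n - 1) mod ?n) = (if odd (3*m+2) then ?n+1 else ?n+2)"
    using lab_s[of "3*m+2" ?n] by simp
  have par: "odd (m+1) \<longleftrightarrow> \<not> odd (3*m+2)" by auto
  define s where "s j = lab ?n j + lab ?n ((j + ?n - 1) mod ?n)" for j
  have "(\<Sum>j\<in>?C. s j) = s 0 + s (m+1) + s (3*m+2)"
    using m by simp
  also have "\<dots> = 10*m+12" using s0 sa sb par unfolding s_def by (cases "odd (m+1)") auto
  finally show "(\<Sum>j\<in>?C. lab ?n j + lab ?n ((j + ?n - 1) mod ?n)) = 10*m+12" unfolding s_def .
  show "10*m+12 \<noteq> 2*(?n+2)" "10*m+12 \<noteq> 2*(?n+1)" using m by auto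
  define k where "k = (if even m then m+1 else 3*m+2)"
  show "odd k" "k \<le> ?n" "k mod ?n \<in> ?C" unfolding k_def by auto
qed


theorem mainTheorem10:
  fixes m :: nat
  assumes "m \<ge> 2"
  shows
   "(\<forall>A B. partition_on {i. i < 4*m+2 \<and> even i \<and> i \<noteq> 0} A \<and> (\<forall>b\<in>A. card b = 2) \<and>
           partition_on {i. i < 4*m+2 \<and> odd i \<and> i \<noteq> 2*m+1} B \<and> (\<forall>b\<in>B. card b = 2) \<longrightarrow>
      chi_la (cycle_quot (4*m+2) (A \<union> B \<union> {{0, 2*m+1}})) {..<4*m+2} = 3)
  \<and> (\<forall>A B. partition_on {i. i < 4*m+1 \<and> even i \<and> i \<noteq> 0} A \<and> (\<forall>b\<in>A. card b = 2) \<and>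
           partition_on {i. i < 4*m+1 \<and> odd i} B \<and> (\<forall>b\<in>B. card b = 2) \<longrightarrow>
      chi_la (cycle_quot (4*m+1) (A \<union> B \<union> {{0}})) {..<4*m+1} = 3)
  \<and> (\<forall>A B. partition_on {i. i < 4*m+3 \<and> even i \<and> i \<notin> {0, m+1, 3*m+2}} A \<and> (\<forall>b\<in>A. card b = 2) \<and>
           partition_on {i. i < 4*m+3 \<and> odd i \<and> i \<notin> {0, m+1, 3*m+2}} B \<and> (\<forall>b\<in>B. card b = 2) \<longrightarrow>
      chi_la (cycle_quot (4*m+3) (A \<union> B \<union> {{0, m+1, 3*m+2}})) {..<4*m+3} = 3)"
  proof (intro conjI allI impI)
  fix A B :: "nat set set"
  assume h: "partition_on {i. i < 4*m+2 \<and> even i \<and> i \<noteq> 0} A \<and> (\<forall>b\<in>A. card b = 2) \<and>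
           partition_on {i. i < 4*m+2 \<and> odd i \<and> i \<noteq> 2*m+1} B \<and> (\<forall>b\<in>B. card b = 2)"
  show "chi_la (cycle_quot (4*m+2) (A \<union> B \<union> {{0, 2*m+1}})) {..<4*m+2} = 3"
    by (rule case1[OF assms conjunct1[OF h] conjunct1[OF conjunct2[OF h]] conjunct1[OF conjunct2[OF conjunct2[OF h]]] conjunct2[OF conjunct2[OF conjunct2[OF h]]]])
next
  fix A B :: "nat set set"
  assume h: "partition_on {i. i < 4*m+1 \<and> even i \<and> i \<noteq> 0} A \<and> (\<forall>b\<in>A. card b = 2) \<and>
           partition_on {i. i < 4*m+1 \<and> odd i} B \<and> (\<forall>b\<in>B. card b = 2)"
  show "chi_la (cycle_quot (4*m+1) (A \<union> B \<union> {{0}})) {..<4*m+1} = 3"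
    by (rule case2[OF assms conjunct1[OF h] conjunct1[OF conjunct2[OF h]] conjunct1[OF conjunct2[OF conjunct2[OF h]]] conjunct2[OF conjunct2[OF conjunct2[OF h]]]])
next
  fix A B :: "nat set set"
  assume h: "partition_on {i. i < 4*m+3 \<and> even i \<and> i \<notin> {0, m+1, 3*m+2}} A \<and> (\<forall>b\<in>A. card b = 2) \<and>
           partition_on {i. i < 4*m+3 \<and> odd i \<and> i \<notin> {0, m+1, 3*m+2}} B \<and> (\<forall>b\<in>B. card b = 2)"
  show "chi_la (cycle_quot (4*m+3) (A \<union> B \<union> {{0, m+1, 3*m+2}})) {..<4*m+3} = 3"
    by (rule case3[OF assms conjunct1[OF h] conjunct1[OF conjunct2[OF h]] conjunct1[OF conjunct2[OF conjunct2[OF h]]] conjunct2[OF conjunct2[OF conjunct2[OF h]]]])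
qed

end
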